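(* Let $v_1,\dots,v_{d+1}$ be the vertices of a $d$-simplex in general position, and let $\ell,k\ge0$ be integers with $\ell+k\le d-2$. Let $p$ be any real-valued function of $\ell$ real variables (defined at all points $(z(\sigma,1),\dots,z(\sigma,\ell))$), and set $q(\sigma)=p(z(\sigma,1),\dots,z(\sigma,\ell))$ for $\sigma\in\mathfrak S_d$. Then $$\sum_{\sigma\in\mathfrak S_d}\operatorname{sign}(\sigma)\,q(\sigma)\,\frac{\prod_{j=\ell+1}^dz(\sigma,j)}{z(\sigma,\ell+1)^{k+1}}=0.$$
   Context: Write $v_i=(x_{i,1},\dots,x_{i,d})$. $\pi^{(j)}$ forgets the last $j$ coordinates; general position means that for every $0\le k\le d-1$ and every $(k+1)$-subset $U$ of the vertices, $\pi^{(d-k)}(\mathrm{conv}(U))$ is a $k$-simplex. $X(\sigma,k)$ ($1\le k\le d$) is the $(k+1)\times(k+1)$ matrix with rows $(1,x_{\sigma(r),1},\dots,x_{\sigma(r),k})$, $r=1,\dots,k$, and last row $(1,x_{d+1,1},\dots,x_{d+1,k})$; $Y(\sigma,k)$ is the $k\times k$ matrix with rows $(1,x_{\sigma(r),1},\dots,x_{\sigma(r),k-1})$, $r=1,\dots,k$; $z(\sigma,k)=\det X(\sigma,k)/\det Y(\sigma,k)$ (nonzero by general position). *)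

theory Defs
  imports "Jordan_Normal_Form.Determinant"
begin

text \<open>Vertices are encoded as v :: nat => nat => real with v i j = x_{i,j}
  for 1 <= i <= d+1 and 1 <= j <= d (other values are irrelevant).\<close>

definition aff_indep_proj :: "(nat \<Rightarrow> nat \<Rightarrow> real) \<Rightarrow> nat \<Rightarrow> nat set \<Rightarrow> bool" where
  "aff_indep_proj v k U \<longleftrightarrow>
     (\<forall>c :: nat \<Rightarrow> real. (\<Sum>u\<in>U. c u) = 0 \<and> (\<forall>j\<in>{1..k}. (\<Sum>u\<in>U. c u * v u j) = 0)
        \<longrightarrow> (\<forall>u\<in>U. c u = 0))"

definition is_d_simplex :: "nat \<Rightarrow> (nat \<Rightarrow> nat \<Rightarrow> real) \<Rightarrow> bool" where
  "is_d_simplex d v \<longleftrightarrow> aff_indep_proj v d {1..d+1}"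

text \<open>General position: for each 0 <= k <= d-1 and each (k+1)-subset U of the vertices,
  the projection pi^(d-k) (to the first k coordinates) of conv U is a k-simplex.\<close>
definition general_position :: "nat \<Rightarrow> (nat \<Rightarrow> nat \<Rightarrow> real) \<Rightarrow> bool" where
  "general_position d v \<longleftrightarrow>
     (\<forall>k<d. \<forall>U. U \<subseteq> {1..d+1} \<and> card U = k + 1 \<longrightarrow> aff_indep_proj v k U)"

definition Xmat :: "nat \<Rightarrow> (nat \<Rightarrow> nat \<Rightarrow> real) \<Rightarrow> (nat \<Rightarrow> nat) \<Rightarrow> nat \<Rightarrow> real mat" where
  "Xmat d v \<sigma> k = mat (k+1) (k+1)
     (\<lambda>(r, j). if j = 0 then 1 else if r < k then v (\<sigma> (r+1)) j else v (d+1) j)"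

definition Ymat :: "(nat \<Rightarrow> nat \<Rightarrow> real) \<Rightarrow> (nat \<Rightarrow> nat) \<Rightarrow> nat \<Rightarrow> real mat" where
  "Ymat v \<sigma> k = mat k k (\<lambda>(r, j). if j = 0 then 1 else v (\<sigma> (r+1)) j)"

definition zval :: "nat \<Rightarrow> (nat \<Rightarrow> nat \<Rightarrow> real) \<Rightarrow> (nat \<Rightarrow> nat) \<Rightarrow> nat \<Rightarrow> real" where
  "zval d v \<sigma> k = det (Xmat d v \<sigma> k) / det (Ymat v \<sigma> k)"

end

theory Submission
  imports Defs "HOL-Combinatorics.Multiset_Permutations"
begin
definition Dm :: "(nat \<Rightarrow> nat \<Rightarrow> real) \<Rightarrow> nat list \<Rightarrow> real mat" where
  "Dm v xs = mat (length xs) (length xs) (\<lambda>(r,c). if c = 0 then 1 else v (xs!r) c)"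

definition DD :: "(nat \<Rightarrow> nat \<Rightarrow> real) \<Rightarrow> nat list \<Rightarrow> real" where
  "DD v xs = det (Dm v xs)"

lemma Dm_carrier[simp]: "Dm v xs \<in> carrier_mat (length xs) (length xs)"
  by (simp add: Dm_def)

lemma Dm_index[simp]: "r < length xs \<Longrightarrow> c < length xs \<Longrightarrow>
   Dm v xs $$ (r,c) = (if c = 0 then 1 else v (xs!r) c)"
  by (simp add: Dm_def)

lemma cof_last_indep:
  assumes "c < Suc (length T)"
  shows "cofactor (Dm v (T@[p])) (length T) c = cofactor (Dm v (T@[q])) (length T) c"
proof -
  have "mat_delete (Dm v (T@[p])) (length T) c = mat_delete (Dm v (T@[q])) (length T) c"
    unfolding mat_delete_def Dm_def by (rule eq_matI) (auto simp: nth_append)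
  thus ?thesis unfolding cofactor_def by simp
qed

lemma DD_last_row:
  "DD v (T@[p]) = (\<Sum>j<Suc (length T). (if j = 0 then 1 else v p j) * cofactor (Dm v (T@[q])) (length T) j)"
proof -
  have "DD v (T@[p]) = (\<Sum>j<Suc (length T). Dm v (T@[p]) $$ (length T, j) * cofactor (Dm v (T@[p])) (length T) j)"
    unfolding DD_def by (rule laplace_expansion_row[of _ "Suc (length T)"]) (auto simp: Dm_def)
  also have "\<dots> = (\<Sum>j<Suc (length T). (if j = 0 then 1 else v p j) * cofactor (Dm v (T@[q])) (length T) j)"
    by (intro sum.cong refl arg_cong2[where f="(*)"]) (auto simp: nth_append intro: cof_last_indep)
  finally show ?thesis .
qed

lemma DD_dup: assumes "i < length T" shows "DD v (T@[T!i]) = 0"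
proof -
  have "det (Dm v (T@[T!i])) = 0"
    by (rule det_identical_rows[of _ "Suc (length T)" i "length T"])
       (use assms in \<open>auto simp: row_def nth_append Dm_def\<close>)
  thus ?thesis by (simp add: DD_def)
qed

lemma three_term:
  "DD v (T@[a]) * DD v (T@[b,c]) - DD v (T@[b]) * DD v (T@[a,c]) + DD v (T@[c]) * DD v (T@[a,b]) = 0"
proof -
  define m where "m = length T"
  define xs where "xs = T@[a,b,c]"
  have lxs: "length xs = m+3" by (simp add: xs_def m_def)
  define N where "N = mat (m+3) (m+3) (\<lambda>(r,j). if j = m+2 then DD v (T@[xs!r]) else (if j = 0 then 1 else v (xs!r) j))"
  have N: "N \<in> carrier_mat (m+3) (m+3)" by (simp add: N_def)
  define w where "w = vec (m+3) (\<lambda>j. if j \<le> m then cofactor (Dm v (T@[a])) m j else if j = m+1 then 0 else (-1::real))"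
  have w: "w \<in> carrier_vec (m+3)" by (simp add: w_def)
  have wnz: "w \<noteq> 0\<^sub>v (m+3)"
  proof
    assume "w = 0\<^sub>v (m+3)"
    hence "w $ (m+2) = 0\<^sub>v (m+3) $ (m+2)" by simp
    thus False by (simp add: w_def)
  qed
  have Nw: "N *\<^sub>v w = 0\<^sub>v (m+3)"
  proof (rule eq_vecI)
    fix r assume "r < dim_vec (0\<^sub>v (m+3) :: real vec)"
    hence r: "r < m+3" by simp
    have "(N *\<^sub>v w) $ r = (\<Sum>j\<in>{0..<m+3}. N $$ (r,j) * w $ j)"
      using r N w by (simp add: scalar_prod_def)
    also have "\<dots> = (\<Sum>j<m+1. N $$ (r,j) * w $ j) + N $$ (r,m+1) * w $ (m+1) + N $$ (r,m+2) * w $ (m+2)"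
      by (simp add: atLeast0LessThan numeral_3_eq_3)
    also have "(\<Sum>j<m+1. N $$ (r,j) * w $ j) = (\<Sum>j<Suc m. (if j = 0 then 1 else v (xs!r) j) * cofactor (Dm v (T@[a])) m j)"
      using r by (intro sum.cong refl) (auto simp: N_def w_def)
    also have "\<dots> = DD v (T@[xs!r])"
      using DD_last_row[of v T "xs!r" a] by (simp add: m_def)
    finally show "(N *\<^sub>v w) $ r = 0\<^sub>v (m+3) $ r" using r by (simp add: N_def w_def)
  qed (simp add: N_def)
  have detN: "det N = 0"
    using det_0_iff_vec_prod_zero[OF N] w wnz Nw by blast
  have "det N = (\<Sum>r<m+3. N $$ (r,m+2) * cofactor N r (m+2))"
    by (rule laplace_expansion_column[OF N]) simp
  also have "\<dots> = (\<Sum>r<m. N $$ (r,m+2) * cofactor N r (m+2)) + N $$ (m,m+2) * cofactor N m (m+2)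
      + N $$ (m+1,m+2) * cofactor N (m+1) (m+2) + N $$ (m+2,m+2) * cofactor N (m+2) (m+2)"
    by (simp add: numeral_3_eq_3)
  also have "(\<Sum>r<m. N $$ (r,m+2) * cofactor N r (m+2)) = 0"
  proof (rule sum.neutral, rule ballI)
    fix r assume "r \<in> {..<m}"
    hence r: "r < m" by simp
    hence "xs ! r = T ! r" by (simp add: xs_def m_def nth_append)
    hence "N $$ (r,m+2) = 0" using r DD_dup[of r T v] by (simp add: N_def m_def)
    thus "N $$ (r,m+2) * cofactor N r (m+2) = 0" by simp
  qed
  finally have dN: "det N = N $$ (m,m+2) * cofactor N m (m+2)
      + N $$ (m+1,m+2) * cofactor N (m+1) (m+2) + N $$ (m+2,m+2) * cofactor N (m+2) (m+2)" by simp
  have md1: "mat_delete N m (m+2) = Dm v (T@[b,c])"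
    unfolding mat_delete_def Dm_def
    by (rule eq_matI) (auto simp: N_def xs_def m_def nth_append)
  have md2: "mat_delete N (m+1) (m+2) = Dm v (T@[a,c])"
    unfolding mat_delete_def Dm_def
    by (rule eq_matI) (auto simp: N_def xs_def m_def nth_append)
  have md3: "mat_delete N (m+2) (m+2) = Dm v (T@[a,b])"
    unfolding mat_delete_def Dm_def
    by (rule eq_matI) (auto simp: N_def xs_def m_def nth_append less_Suc_eq)
  show ?thesis using detN dN md1 md2 md3
    by (simp add: N_def xs_def m_def cofactor_def DD_def[symmetric] nth_append)
qed

lemma sum_set_nth: "distinct xs \<Longrightarrow> (\<Sum>u\<in>set xs. g u) = (\<Sum>r<length xs. g (xs!r))"
  by (simp add: sum.distinct_set_conv_list sum_list_sum_nth atLeast0LessThan)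

lemma DD_nz_aff:
  fixes xs :: "nat list"
  assumes ai: "aff_indep_proj v (length xs - 1) (set xs)" and dist: "distinct xs" and ne: "xs \<noteq> []"
  shows "DD v xs \<noteq> 0"
proof
  assume "DD v xs = 0"
  define n where "n = length xs"
  have A: "(Dm v xs)\<^sup>T \<in> carrier_mat n n" by (simp add: n_def)
  have "det ((Dm v xs)\<^sup>T) = 0" using \<open>DD v xs = 0\<close> det_transpose[of "Dm v xs" n]
    by (simp add: DD_def n_def)
  then obtain c where c: "c \<in> carrier_vec n" "c \<noteq> 0\<^sub>v n" "(Dm v xs)\<^sup>T *\<^sub>v c = 0\<^sub>v n"
    using det_0_iff_vec_prod_zero[OF A] by blast
  have eq: "(\<Sum>r<n. (if j = 0 then 1 else v (xs!r) j) * c $ r) = 0" if j: "j < n" for j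
  proof -
    have "((Dm v xs)\<^sup>T *\<^sub>v c) $ j = 0" using c(3) j by simp
    moreover have "((Dm v xs)\<^sup>T *\<^sub>v c) $ j = (\<Sum>r\<in>{0..<n}. (Dm v xs) $$ (r,j) * c $ r)"
      using j c(1) by (simp add: scalar_prod_def n_def Dm_def)
    ultimately show ?thesis using j by (simp add: atLeast0LessThan n_def)
  qed
  define cf where "cf u = c $ (inv_into {..<n} (nth xs) u)" for u :: nat
  have cfn: "cf (xs!r) = c $ r" if "r < n" for r
  proof -
    have "inj_on (nth xs) {..<n}" using dist by (simp add: inj_on_nth n_def)
    thus ?thesis using that by (simp add: cf_def inv_into_f_f)
  qed
  have "(\<Sum>u\<in>set xs. cf u) = 0 \<and> (\<forall>j\<in>{1..length xs - 1}. (\<Sum>u\<in>set xs. cf u * v u j) = 0)"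
  proof (intro conjI ballI)
    show "(\<Sum>u\<in>set xs. cf u) = 0"
      using eq[of 0] ne by (simp add: sum_set_nth[OF dist] cfn n_def)
    fix j assume "j \<in> {1..length xs - 1}"
    hence j: "j < n" "j \<noteq> 0" by (auto simp: n_def)
    show "(\<Sum>u\<in>set xs. cf u * v u j) = 0"
      using eq[OF j(1)] j by (simp add: sum_set_nth[OF dist] cfn n_def mult.commute)
  qed
  hence "\<forall>u\<in>set xs. cf u = 0" using ai unfolding aff_indep_proj_def by blast
  hence "c = 0\<^sub>v n"
    by (intro eq_vecI) (use c(1) cfn in \<open>auto simp: n_def\<close>)
  thus False using c(2) by simp
qed

locale gpv =
  fixes d :: nat and v :: "nat \<Rightarrow> nat \<Rightarrow> real"
  assumes gp: "general_position d v"
begin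

lemma DD_nz:
  assumes "distinct xs" "set xs \<subseteq> {1..d+1}" "length xs \<le> d"
  shows "DD v xs \<noteq> 0"
proof (cases "xs = []")
  case True thus ?thesis by (simp add: DD_def Dm_def det_def)
next
  case False
  have "length xs - 1 < d" using assms False by (cases xs) auto
  hence "aff_indep_proj v (length xs - 1) (set xs)"
    using gp[unfolded general_position_def, rule_format, of "length xs - 1" "set xs"] assms False
    by (simp add: distinct_card)
  thus ?thesis using DD_nz_aff assms False by blast
qed

end

lemma Dm_permute:
  assumes p: "p permutes {..<length ys}" and xs: "permute_list p ys = xs"
  shows "Dm v xs = mat (length ys) (length ys) (\<lambda>(i,j). Dm v ys $$ (p i, j))"
proof -
  have l: "length xs = length ys" using xs by (auto simp: permute_list_def)
  show ?thesis
  proof (rule eq_matI)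
    fix i j assume "i < dim_row (mat (length ys) (length ys) (\<lambda>(i,j). Dm v ys $$ (p i, j)))"
      "j < dim_col (mat (length ys) (length ys) (\<lambda>(i,j). Dm v ys $$ (p i, j)))"
    hence ij: "i < length ys" "j < length ys" by auto
    have pi: "p i < length ys" using permutes_in_image[OF p] ij by auto
    have "xs ! i = ys ! p i" using xs ij p by (auto simp: permute_list_nth)
    thus "Dm v xs $$ (i, j) = mat (length ys) (length ys) (\<lambda>(i,j). Dm v ys $$ (p i, j)) $$ (i, j)"
      using ij pi l by (simp add: Dm_def)
  qed (auto simp: l Dm_def)
qed

lemma DD_permute:
  assumes p: "p permutes {..<length ys}" and xs: "permute_list p ys = xs"
  shows "DD v xs = of_int (sign p) * DD v ys"
  unfolding DD_def Dm_permute[OF assms]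
  by (rule det_permute_rows) (use p in \<open>auto simp: atLeast0LessThan\<close>)

lemma DD_perm_prod:
  assumes "mset xs = mset ys"
  shows "DD v xs * DD v (xs@[c]) = DD v ys * DD v (ys@[c])"
proof -
  obtain p where p: "p permutes {..<length ys}" "permute_list p ys = xs"
    using mset_eq_permutation[OF assms] by blast
  have p': "p permutes {..<length (ys@[c])}"
    using p(1) by (rule permutes_subset) auto
  have "permute_list p (ys@[c]) = xs@[c]"
  proof -
    have pn: "p (length ys) = length ys" using permutes_not_in[OF p(1)] by simp
    have pi: "p i < length ys" if "i < length ys" for i using permutes_in_image[OF p(1)] that by auto
    show ?thesis using p(2) pn pi unfolding permute_list_def
      by (auto simp: nth_append less_Suc_eq intro!: nth_equalityI)
  qed
  hence e1: "DD v (xs@[c]) = of_int (sign p) * DD v (ys@[c])"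
    using DD_permute[OF p'] by simp
  have e2: "DD v xs = of_int (sign p) * DD v ys" using DD_permute[OF p] .
  have s2: "real_of_int (sign p) * real_of_int (sign p) = 1"
    by (metis of_int_mult of_int_1 sign_idempotent)
  have "DD v xs * DD v (xs@[c]) = (of_int (sign p) * of_int (sign p)) * (DD v ys * DD v (ys@[c]))"
    unfolding e1 e2 by (simp only: mult_ac)
  thus ?thesis using s2 by simp
qed

lemma DD_sign:
  assumes s: "\<sigma> permutes {1..d}"
  shows "DD v (map \<sigma> [1..<d+1]) = of_int (sign \<sigma>) * DD v [1..<d+1]"
proof -
  define f where "f = (\<lambda>i::nat. i - 1)"
  have bij: "bij_betw f {1..d} {..<d}"
    unfolding f_def by (rule bij_betw_byWitness[where f'="\<lambda>i. i+1"]) auto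
  have inj: "inj_on f {1..d}" using bij by (rule bij_betw_imp_inj_on)
  define p where "p = map_permutation {1..d} f \<sigma>"
  have pp: "p permutes {..<d}" unfolding p_def by (rule map_permutation_permutes[OF bij s])
  have sp: "sign p = sign \<sigma>" unfolding p_def by (rule sign_map_permutation[OF inj s]) simp
  have fA: "f ` {1..d} = {..<d}" using bij by (simp add: bij_betw_def)
  have pv: "p i = \<sigma> (i+1) - 1" if "i < d" for i
  proof -
    have "inv_into {1..d} f i = i + 1"
      by (rule inv_into_f_eq[OF inj]) (use that in \<open>auto simp: f_def\<close>)
    thus ?thesis using that fA unfolding p_def map_permutation_def restrict_id_def
      by (simp add: f_def)
  qed
  have "permute_list p [1..<d+1] = map \<sigma> [1..<d+1]"
  proof (rule nth_equalityI)
    fix i assume "i < length (permute_list p [1..<d+1])"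
    hence i: "i < d" by (simp del: upt_Suc)
    have "p i < d" using permutes_in_image[OF pp] i by auto
    moreover have "\<sigma> (i+1) \<in> {1..d}" using permutes_in_image[OF s] i by auto
    ultimately show "permute_list p [1..<d+1] ! i = map \<sigma> [1..<d+1] ! i"
      using i pp by (auto simp: permute_list_nth pv simp del: upt_Suc)
  qed (simp del: upt_Suc)
  thus ?thesis using DD_permute[of p "[1..<d+1]" "map \<sigma> [1..<d+1]" v] pp sp by (simp del: upt_Suc)
qed

definition pf :: "('a \<Rightarrow> real) \<Rightarrow> 'a set \<Rightarrow> nat \<Rightarrow> real" where
  "pf w B m = (\<Sum>a\<in>B. w a ^ m / (\<Prod>b\<in>B-{a}. (w a - w b)))"

lemma pf_rec:
  assumes fin: "finite B" and inj: "inj_on w B" and c: "c \<in> B"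
  shows "pf w B (Suc m) = w c * pf w B m + pf w (B-{c}) m"
proof -
  have "pf w B (Suc m) - w c * pf w B m = (\<Sum>a\<in>B. w a ^ m * (w a - w c) / (\<Prod>b\<in>B-{a}. (w a - w b)))"
    unfolding pf_def by (simp add: sum_distrib_left sum_subtractf[symmetric] algebra_simps diff_divide_distrib)
  also have "\<dots> = (\<Sum>a\<in>B-{c}. w a ^ m * (w a - w c) / (\<Prod>b\<in>B-{a}. (w a - w b)))"
    using fin c by (subst sum.remove[of B c]) auto
  also have "\<dots> = (\<Sum>a\<in>B-{c}. w a ^ m / (\<Prod>b\<in>(B-{c})-{a}. (w a - w b)))"
  proof (rule sum.cong[OF refl])
    fix a assume a: "a \<in> B - {c}"
    have "(\<Prod>b\<in>B-{a}. (w a - w b)) = (w a - w c) * (\<Prod>b\<in>(B-{a})-{c}. (w a - w b))"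
      using fin a c by (subst prod.remove[of "B-{a}" c]) auto
    moreover have "w a - w c \<noteq> 0" using inj a c by (auto dest: inj_onD)
    moreover have "(B-{a})-{c} = (B-{c})-{a}" by auto
    ultimately show "w a ^ m * (w a - w c) / (\<Prod>b\<in>B-{a}. (w a - w b)) = w a ^ m / (\<Prod>b\<in>(B-{c})-{a}. (w a - w b))"
      by simp
  qed
  finally show ?thesis unfolding pf_def by (simp add: algebra_simps)
qed

lemma pf_vals:
  assumes "finite B" "inj_on w B" "card B = n"
  shows "(m + 1 = n \<longrightarrow> pf w B m = 1) \<and> (m + 2 \<le> n \<longrightarrow> pf w B m = 0)"
  using assms
proof (induction n arbitrary: B m)
  case 0 thus ?case by simp
next
  case (Suc n)
  show ?case
  proof (cases n)
    case 0
    then obtain a where B: "B = {a}" using Suc.prems card_1_singletonE by auto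
    thus ?thesis using 0 by (simp add: pf_def)
  next
    case (Suc n')
    have zero: "pf w B m = 0" if m: "m + 2 \<le> Suc n" for m
    proof -
      obtain c where c: "c \<in> B" using Suc.prems by fastforce
      have "card (B - {c}) = n" using Suc.prems c by simp
      hence "B - {c} \<noteq> {}" using Suc by (metis card.empty nat.distinct(1))
      then obtain e where e: "e \<in> B - {c}" by blast
      have ce: "c \<in> B" "e \<in> B" "c \<noteq> e" using c e by auto
      have r1: "pf w B (Suc m) = w c * pf w B m + pf w (B-{c}) m" by (rule pf_rec) (use Suc.prems ce in auto)
      have r2: "pf w B (Suc m) = w e * pf w B m + pf w (B-{e}) m" by (rule pf_rec) (use Suc.prems ce in auto)
      have cc: "card (B-{c}) = n" "card (B-{e}) = n" using Suc.prems ce by auto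
      have ij: "inj_on w (B-{c})" "inj_on w (B-{e})" using Suc.prems(2) by (auto intro: inj_on_subset)
      have "pf w (B-{c}) m = pf w (B-{e}) m"
        using Suc.IH[of "B-{c}" m] Suc.IH[of "B-{e}" m] cc Suc.prems m ij
        by (cases "m + 1 = n") auto
      hence "(w c - w e) * pf w B m = 0" using r1 r2 by (simp add: algebra_simps) (metis)
      moreover have "w c \<noteq> w e" using Suc.prems ce by (auto dest: inj_onD)
      ultimately show ?thesis by simp
    qed
    have one: "pf w B m = 1" if m: "m + 1 = Suc n" for m
    proof -
      obtain m' where m': "m = Suc m'" using m Suc by (cases m) auto
      obtain c where c: "c \<in> B" using Suc.prems by fastforce
      have "pf w B m = w c * pf w B m' + pf w (B-{c}) m'"
        unfolding m' by (rule pf_rec) (use Suc.prems c in auto)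
      moreover have "pf w B m' = 0" using zero m m' by simp
      moreover have "pf w (B-{c}) m' = 1"
        using Suc.IH[of "B-{c}" m'] Suc.prems c m m' by (auto intro: inj_on_subset)
      ultimately show ?thesis by simp
    qed
    show ?thesis using zero one by blast
  qed
qed

lemma perms_sum:
  assumes "finite B" "B \<noteq> {}"
  shows "(\<Sum>ys\<in>permutations_of_set B. f ys) = (\<Sum>a\<in>B. \<Sum>ys\<in>permutations_of_set (B-{a}). f (a#ys))"
proof -
  have "(\<Sum>ys\<in>permutations_of_set B. f ys) = (\<Sum>ys\<in>(\<Union>a\<in>B. (#) a ` permutations_of_set (B - {a})). f ys)"
    using permutations_of_set_nonempty[OF assms(2)] by simp
  also have "\<dots> = (\<Sum>a\<in>B. \<Sum>ys\<in>(#) a ` permutations_of_set (B - {a}). f ys)"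
    by (rule sum.UNION_disjoint) (use assms in \<open>auto simp: finite_permutations_of_set\<close>)
  also have "\<dots> = (\<Sum>a\<in>B. \<Sum>ys\<in>permutations_of_set (B-{a}). f (a#ys))"
    by (rule sum.cong[OF refl], subst sum.reindex) auto
  finally show ?thesis .
qed

context gpv
begin

definition Z :: "nat list \<Rightarrow> real" where
  "Z xs = DD v (xs @ [Suc d]) / DD v xs"

definition Phi :: "nat list \<Rightarrow> nat set \<Rightarrow> real" where
  "Phi T B = (\<Sum>ys\<in>permutations_of_set B. DD v (T@ys) * (\<Prod>i<length ys. Z (T @ take (Suc i) ys)))"

definition ok :: "nat list \<Rightarrow> nat set \<Rightarrow> bool" where
  "ok T B \<longleftrightarrow> distinct T \<and> finite B \<and> set T \<inter> B = {} \<and> set T \<union> B \<subseteq> {1..d}"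

lemma prod_Cons_shift:
  "(\<Prod>i<length (a#ys). Z (T @ take (Suc i) (a#ys))) = Z (T@[a]) * (\<Prod>i<length ys. Z ((T@[a]) @ take (Suc i) ys))"
  by (simp only: length_Cons prod.lessThan_Suc_shift) simp

lemma Phi_rec:
  assumes "finite B" "B \<noteq> {}"
  shows "Phi T B = (\<Sum>a\<in>B. Z (T@[a]) * Phi (T@[a]) (B-{a}))"
  unfolding Phi_def
  apply (subst perms_sum[OF assms])
  apply (rule sum.cong[OF refl])
  apply (simp only: prod_Cons_shift sum_distrib_left)
  apply (rule sum.cong[OF refl])
  apply (simp add: algebra_simps)
  done

lemma ok_card: "ok T B \<Longrightarrow> length T + card B \<le> d"
proof -
  assume o: "ok T B"
  hence "card (set T \<union> B) \<le> card {1..d}" unfolding ok_def by (intro card_mono) auto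
  moreover have "card (set T \<union> B) = length T + card B"
    using o unfolding ok_def by (simp add: card_Un_disjoint distinct_card)
  ultimately show ?thesis by simp
qed

lemma ok_nz:
  assumes o: "ok T B"
  shows "DD v T \<noteq> 0"
    and "p \<in> B \<Longrightarrow> DD v (T@[p]) \<noteq> 0"
    and "B \<noteq> {} \<Longrightarrow> DD v (T@[Suc d]) \<noteq> 0"
    and "a \<in> B \<Longrightarrow> b \<in> B \<Longrightarrow> a \<noteq> b \<Longrightarrow> DD v (T@[a,b]) \<noteq> 0"
    and "a \<in> B \<Longrightarrow> b \<in> B \<Longrightarrow> a \<noteq> b \<Longrightarrow> DD v (T@[a,Suc d]) \<noteq> 0"
proof -
  have c: "length T + card B \<le> d" using ok_card[OF o] .
  have fin: "finite B" and dT: "distinct T" and dis: "set T \<inter> B = {}" and sub: "set T \<union> B \<subseteq> {1..d}"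
    using o by (auto simp: ok_def)
  show "DD v T \<noteq> 0" using dT sub c by (intro DD_nz) auto
  show "p \<in> B \<Longrightarrow> DD v (T@[p]) \<noteq> 0"
  proof -
    assume p: "p \<in> B"
    have "card B \<ge> 1" using p fin by (metis One_nat_def Suc_leI card_gt_0_iff empty_iff)
    thus ?thesis using dT sub c p dis by (intro DD_nz) auto
  qed
  show "B \<noteq> {} \<Longrightarrow> DD v (T@[Suc d]) \<noteq> 0"
  proof -
    assume "B \<noteq> {}"
    hence "card B \<ge> 1" using fin by (simp add: Suc_leI card_gt_0_iff)
    thus ?thesis using dT sub c by (intro DD_nz) auto
  qed
  assume ab: "a \<in> B" "b \<in> B" "a \<noteq> b"
  have "card {a,b} \<le> card B" using ab fin by (intro card_mono) auto
  hence "card B \<ge> 2" using ab by simp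
  thus "DD v (T@[a,b]) \<noteq> 0" using dT sub c ab dis by (intro DD_nz) auto
  show "DD v (T@[a,Suc d]) \<noteq> 0" using \<open>card B \<ge> 2\<close> dT sub c ab dis by (intro DD_nz) auto
qed

end

context gpv
begin

lemma Z_single: "Z (T@[a]) = DD v (T@[a, Suc d]) / DD v (T@[a])"
  by (simp add: Z_def)

lemma w_diff:
  assumes o: "ok T B" and ab: "a \<in> B" "b \<in> B" "a \<noteq> b"
  shows "Z (T@[a]) - Z (T@[b]) = DD v (T@[Suc d]) * DD v (T@[a,b]) / (DD v (T@[a]) * DD v (T@[b]))"
proof -
  have tt: "DD v (T@[a]) * DD v (T@[b,Suc d]) - DD v (T@[b]) * DD v (T@[a,Suc d]) + DD v (T@[Suc d]) * DD v (T@[a,b]) = 0"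
    by (rule three_term)
  have na: "DD v (T@[a]) \<noteq> 0" and nb: "DD v (T@[b]) \<noteq> 0" using ok_nz(2)[OF o] ab by auto
  have e: "DD v (T@[a,Suc d]) * DD v (T@[b]) - DD v (T@[b,Suc d]) * DD v (T@[a]) = DD v (T@[Suc d]) * DD v (T@[a,b])"
    using tt by (simp add: algebra_simps)
  have "Z (T@[a]) - Z (T@[b]) = (DD v (T@[a,Suc d]) * DD v (T@[b]) - DD v (T@[b,Suc d]) * DD v (T@[a])) / (DD v (T@[a]) * DD v (T@[b]))"
    unfolding Z_single using na nb by (simp add: field_simps)
  thus ?thesis using e by simp
qed

lemma w_inj:
  assumes o: "ok T B"
  shows "inj_on (\<lambda>p. Z (T@[p])) B"
proof (rule inj_onI, rule ccontr)
  fix a b assume ab: "a \<in> B" "b \<in> B" "Z (T@[a]) = Z (T@[b])" "a \<noteq> b"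
  have "DD v (T@[Suc d]) * DD v (T@[a,b]) / (DD v (T@[a]) * DD v (T@[b])) \<noteq> 0"
    using ok_nz[OF o] ab by auto
  thus False using w_diff[OF o ab(1,2,4)] ab(3) by simp
qed

lemma w_nz:
  assumes o: "ok T B" and a: "a \<in> B" and c2: "card B \<ge> 2"
  shows "Z (T@[a]) \<noteq> 0"
proof -
  have fin: "finite B" using o by (simp add: ok_def)
  have "card (B - {a}) \<ge> 1" using c2 a fin by simp
  hence "B - {a} \<noteq> {}" by (metis card.empty not_one_le_zero)
  then obtain b where "b \<in> B" "b \<noteq> a" by blast
  thus ?thesis using ok_nz[OF o] a by (simp add: Z_single)
qed

definition K :: "nat list \<Rightarrow> nat set \<Rightarrow> nat list \<Rightarrow> real" where
  "K T B rs = DD v (T@rs) * DD v (T@rs@[Suc d]) * DD v (T@[Suc d]) ^ (card B - 1) / (\<Prod>p\<in>B. DD v (T@[p]))"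

lemma step:
  assumes o: "ok T B" and cB: "card B = Suc (Suc m)" and a: "a \<in> B" and rs: "rs \<in> permutations_of_set B"
    and rs': "rs' \<in> permutations_of_set (B-{a})"
    and cf: "Phi (T@[a]) (B-{a}) = DD v (T@[a,Suc d])^m * DD v ((T@[a])@rs') * DD v ((T@[a])@rs'@[Suc d])
               / (\<Prod>b\<in>B-{a}. DD v (T@[a,b]))"
  shows "Phi (T@[a]) (B-{a}) = K T B rs * Z (T@[a]) ^ m / (\<Prod>b\<in>B-{a}. (Z (T@[a]) - Z (T@[b])))"
proof -
  have fin: "finite B" using o by (simp add: ok_def)
  define C where "C = DD v (T@[Suc d])"
  define wa where "wa = Z (T@[a])"
  define Da where "Da = DD v (T@[a])"
  define P' where "P' = (\<Prod>b\<in>B-{a}. DD v (T@[b]))"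
  define Q where "Q = (\<Prod>b\<in>B-{a}. (Z (T@[a]) - Z (T@[b])))"
  define X where "X = DD v (T@rs) * DD v (T@rs@[Suc d])"
  have BnE: "B \<noteq> {}" using a by auto
  have nC: "C \<noteq> 0" unfolding C_def using ok_nz(3)[OF o BnE] .
  have nDa: "Da \<noteq> 0" unfolding Da_def using ok_nz(2)[OF o a] .
  have nP': "P' \<noteq> 0" unfolding P'_def using ok_nz(2)[OF o] fin by (auto simp: prod_zero_iff)
  have nQ: "Q \<noteq> 0" unfolding Q_def using w_inj[OF o] fin a by (auto simp: prod_zero_iff dest: inj_onD)
  have cBa: "card (B - {a}) = Suc m" using cB a fin by simp
  have hX: "DD v ((T@[a])@rs') * DD v ((T@[a])@rs'@[Suc d]) = X"
  proof -
    have s1: "set (a#rs') = B" "distinct (a#rs')" using rs' a by (auto simp: permutations_of_set_def)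
    have s2: "set rs = B" "distinct rs" using rs by (auto simp: permutations_of_set_def)
    have "mset (a#rs') = mset rs" using s1 s2 set_eq_iff_mset_eq_distinct[of "a#rs'" rs] by simp
    hence "mset (T@(a#rs')) = mset (T@rs)" by simp
    from DD_perm_prod[OF this, of v "Suc d"] show ?thesis by (simp add: X_def)
  qed
  have hab: "DD v (T@[a,b]) = Da * DD v (T@[b]) * (wa - Z (T@[b])) / C" if b: "b \<in> B - {a}" for b
  proof -
    have nb: "DD v (T@[b]) \<noteq> 0" using ok_nz(2)[OF o] b by auto
    have e: "wa - Z (T@[b]) = C * DD v (T@[a,b]) / (Da * DD v (T@[b]))"
      unfolding wa_def C_def Da_def using w_diff[OF o a, of b] b by auto
    show ?thesis unfolding e using nb nDa nC by (simp add: field_simps)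
  qed
  have hprod: "(\<Prod>b\<in>B-{a}. DD v (T@[a,b])) = Da ^ Suc m * P' * Q / C ^ Suc m"
  proof -
    have "(\<Prod>b\<in>B-{a}. DD v (T@[a,b])) = (\<Prod>b\<in>B-{a}. Da * (DD v (T@[b]) * (wa - Z (T@[b]))) / C)"
      using hab by (intro prod.cong) (auto simp: mult.assoc)
    also have "\<dots> = (\<Prod>b\<in>B-{a}. Da) * ((\<Prod>b\<in>B-{a}. DD v (T@[b])) * (\<Prod>b\<in>B-{a}. (wa - Z (T@[b])))) / (\<Prod>b\<in>B-{a}. C)"
      by (simp only: prod_dividef prod.distrib)
    also have "\<dots> = Da ^ Suc m * (P' * Q) / C ^ Suc m"
      by (simp only: prod_constant cBa P'_def Q_def wa_def)
    finally show ?thesis by (simp only: mult.assoc)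
  qed
  have hPB: "(\<Prod>p\<in>B. DD v (T@[p])) = Da * P'"
    unfolding Da_def P'_def by (rule prod.remove[OF fin a])
  have haC: "DD v (T@[a,Suc d]) = wa * Da" unfolding wa_def Da_def Z_single using nDa Da_def by simp
  have K: "K T B rs = X * C ^ Suc m / (Da * P')"
    unfolding K_def X_def C_def[symmetric] hPB cB by simp
  have "Phi (T@[a]) (B-{a}) = DD v (T@[a,Suc d])^m * (DD v ((T@[a])@rs') * DD v ((T@[a])@rs'@[Suc d]))
               / (\<Prod>b\<in>B-{a}. DD v (T@[a,b]))"
    using cf by (simp only: mult.assoc)
  also have "\<dots> = (wa * Da) ^ m * X / (Da ^ Suc m * P' * Q / C ^ Suc m)"
    by (simp only: hX hprod haC)
  also have "\<dots> = (X * C ^ Suc m / (Da * P')) * wa ^ m / Q"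
  proof -
    have "(wa * Da) ^ m * X / (Da ^ Suc m * P' * Q / C ^ Suc m) = (wa ^ m * X * C ^ Suc m) * Da ^ m / ((Da * P' * Q) * Da ^ m)"
      using nC by (simp add: power_mult_distrib divide_simps ac_simps)
    also have "\<dots> = (wa ^ m * X * C ^ Suc m) / (Da * P' * Q)"
      using nDa by simp
    finally show ?thesis by simp
  qed
  also have "\<dots> = K T B rs * wa ^ m / Q" unfolding K ..
  finally show ?thesis by (simp add: wa_def Q_def)
qed

end

context gpv
begin

lemma ok_step: "ok T B \<Longrightarrow> a \<in> B \<Longrightarrow> ok (T@[a]) (B-{a})"
  unfolding ok_def by auto

lemma perm_exists: "finite B \<Longrightarrow> \<exists>rs. rs \<in> permutations_of_set B"
  using finite_distinct_list[of B] by (auto simp: permutations_of_set_def)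

lemma CF:
  assumes "ok T B" "card B = Suc n" "rs \<in> permutations_of_set B"
  shows "Phi T B = DD v (T@[Suc d])^n * DD v (T@rs) * DD v (T@rs@[Suc d]) / (\<Prod>p\<in>B. DD v (T@[p]))"
  using assms
proof (induction n arbitrary: T B rs)
  case 0
  then obtain a where B: "B = {a}" using card_1_singletonE by auto
  hence rs: "rs = [a]" using 0 by simp
  have "Phi T B = DD v (T@[a]) * Z (T@[a])" unfolding Phi_def B by simp
  also have "\<dots> = DD v (T@[a, Suc d])"
    using ok_nz(2)[OF 0(1), of a] B by (simp add: Z_single)
  finally show ?case using ok_nz(2)[OF 0(1), of a] B rs by simp
next
  case (Suc m)
  have o: "ok T B" and cB: "card B = Suc (Suc m)" and rs: "rs \<in> permutations_of_set B" using Suc.prems by auto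
  have fin: "finite B" using o by (simp add: ok_def)
  have BnE: "B \<noteq> {}" using cB by auto
  define w where "w p = Z (T@[p])" for p
  have ph: "Phi (T@[a]) (B-{a}) = K T B rs * w a ^ m / (\<Prod>b\<in>B-{a}. (w a - w b))" if a: "a \<in> B" for a
  proof -
    obtain rs' where rs': "rs' \<in> permutations_of_set (B-{a})" using perm_exists fin by blast
    have cBa: "card (B-{a}) = Suc m" using cB a fin by simp
    have "Phi (T@[a]) (B-{a}) = DD v ((T@[a])@[Suc d])^m * DD v ((T@[a])@rs') * DD v ((T@[a])@rs'@[Suc d])
          / (\<Prod>p\<in>B-{a}. DD v ((T@[a])@[p]))"
      by (rule Suc.IH[OF ok_step[OF o a] cBa rs'])
    hence "Phi (T@[a]) (B-{a}) = DD v (T@[a,Suc d])^m * DD v ((T@[a])@rs') * DD v ((T@[a])@rs'@[Suc d])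
          / (\<Prod>b\<in>B-{a}. DD v (T@[a,b]))" by simp
    from step[OF o cB a rs rs' this] show ?thesis by (simp add: w_def)
  qed
  have "Phi T B = (\<Sum>a\<in>B. w a * Phi (T@[a]) (B-{a}))"
    unfolding w_def by (rule Phi_rec[OF fin BnE])
  also have "\<dots> = (\<Sum>a\<in>B. K T B rs * (w a ^ Suc m / (\<Prod>b\<in>B-{a}. (w a - w b))))"
    by (rule sum.cong[OF refl]) (simp add: ph)
  also have "\<dots> = K T B rs * pf w B (Suc m)"
    by (simp add: pf_def sum_distrib_left)
  also have "pf w B (Suc m) = 1"
  proof -
    have "inj_on w B" unfolding w_def by (rule w_inj[OF o])
    thus ?thesis using pf_vals[OF fin _ cB, of w "Suc m"] by simp
  qed
  finally show ?case by (simp add: K_def cB)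
qed

end

context gpv
begin

lemma aux1: "(x::real) * (w * P) / wk = w / wk * (x * P)"
  by (simp add: mult.commute mult.left_commute)
lemma aux2: assumes "(w::real) / wk * wm = wmk" shows "w / wk * (Kc * wm / Q) = Kc * (wmk / Q)"
  by (simp add: assms[symmetric] mult.commute mult.left_commute)
lemma aux3: assumes "(w::real) \<noteq> 0" "k \<le> m" shows "w / w ^ Suc k * w ^ m = w ^ (m - k)"
proof -
  have "w ^ m = w ^ (m - k) * w ^ k" using assms(2) by (simp add: power_add[symmetric])
  thus ?thesis using assms(1) by simp
qed

lemma main_inner:
  assumes o: "ok T B" and cB: "card B = n" and kn: "k + 2 \<le> n"
  shows "(\<Sum>ys\<in>permutations_of_set B. DD v (T@ys) * (\<Prod>i<length ys. Z (T @ take (Suc i) ys)) / Z (T@[hd ys]) ^ Suc k) = 0"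
proof -
  have fin: "finite B" using o by (simp add: ok_def)
  define m where "m = n - 2"
  have m: "n = Suc (Suc m)" using kn unfolding m_def by simp
  have cB': "card B = Suc (Suc m)" using cB m by simp
  have BnE: "B \<noteq> {}" using cB' by auto
  obtain rs where rs: "rs \<in> permutations_of_set B" using perm_exists fin by blast
  define w where "w p = Z (T@[p])" for p
  have c2: "card B \<ge> 2" using cB' by simp
  have ph: "Phi (T@[a]) (B-{a}) = K T B rs * w a ^ m / (\<Prod>b\<in>B-{a}. (w a - w b))" if a: "a \<in> B" for a
  proof -
    obtain rs' where rs': "rs' \<in> permutations_of_set (B-{a})" using perm_exists fin by blast
    have cBa: "card (B-{a}) = Suc m" using cB' a fin by simp
    have "Phi (T@[a]) (B-{a}) = DD v ((T@[a])@[Suc d])^m * DD v ((T@[a])@rs') * DD v ((T@[a])@rs'@[Suc d])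
          / (\<Prod>p\<in>B-{a}. DD v ((T@[a])@[p]))"
      by (rule CF[OF ok_step[OF o a] cBa rs'])
    hence "Phi (T@[a]) (B-{a}) = DD v (T@[a,Suc d])^m * DD v ((T@[a])@rs') * DD v ((T@[a])@rs'@[Suc d])
          / (\<Prod>b\<in>B-{a}. DD v (T@[a,b]))" by simp
    from step[OF o cB' a rs rs' this] show ?thesis by (simp add: w_def)
  qed
  have "(\<Sum>ys\<in>permutations_of_set B. DD v (T@ys) * (\<Prod>i<length ys. Z (T @ take (Suc i) ys)) / Z (T@[hd ys]) ^ Suc k)
      = (\<Sum>a\<in>B. \<Sum>ys\<in>permutations_of_set (B-{a}). DD v (T@(a#ys)) * (\<Prod>i<length (a#ys). Z (T @ take (Suc i) (a#ys))) / Z (T@[a]) ^ Suc k)"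
    by (subst perms_sum[OF fin BnE]) (simp only: list.sel(1))
  also have "\<dots> = (\<Sum>a\<in>B. (w a / w a ^ Suc k) * Phi (T@[a]) (B-{a}))"
    unfolding prod_Cons_shift Phi_def w_def sum_distrib_left sum_divide_distrib
    by (intro sum.cong refl) (simp only: aux1 append_assoc append_Cons append_Nil)
  also have "\<dots> = (\<Sum>a\<in>B. K T B rs * (w a ^ (m - k) / (\<Prod>b\<in>B-{a}. (w a - w b))))"
  proof (rule sum.cong[OF refl])
    fix a assume a: "a \<in> B"
    have nz: "w a \<noteq> 0" unfolding w_def by (rule w_nz[OF o a c2])
    have km: "k \<le> m" using kn m by simp
    show "w a / w a ^ Suc k * Phi (T@[a]) (B-{a}) = K T B rs * (w a ^ (m - k) / (\<Prod>b\<in>B-{a}. (w a - w b)))"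
      unfolding ph[OF a] by (rule aux2[OF aux3[OF nz km]])
  qed
  also have "\<dots> = K T B rs * pf w B (m - k)"
    by (simp add: pf_def sum_distrib_left)
  also have "pf w B (m - k) = 0"
  proof -
    have "inj_on w B" unfolding w_def by (rule w_inj[OF o])
    thus ?thesis using pf_vals[OF fin _ cB', of w "m - k"] kn m by simp
  qed
  finally show ?thesis by simp
qed

end

lemma prod_shift_ivl: "(\<Prod>j\<in>{l+1..l+n}. g j) = (\<Prod>i<n. g (l+1+i))" for l n :: nat
proof (induction n)
  case 0 thus ?case by simp
next
  case (Suc n)
  have "{l+1..l+Suc n} = insert (l+Suc n) {l+1..l+n}" by auto
  hence "(\<Prod>j\<in>{l+1..l+Suc n}. g j) = g (l + Suc n) * (\<Prod>j\<in>{l+1..l+n}. g j)" by simp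
  thus ?case using Suc by (simp add: algebra_simps)
qed

lemma prefix_zero:
  assumes fin: "finite A" and lA: "l \<le> card A"
    and H: "\<And>T. length T = l \<Longrightarrow> distinct T \<Longrightarrow> set T \<subseteq> A \<Longrightarrow>
              (\<Sum>ys\<in>permutations_of_set (A - set T). F (T@ys)) = (0::real)"
  shows "(\<Sum>xs\<in>permutations_of_set A. F xs) = 0"
proof -
  have "\<forall>T. length T = l - j \<and> distinct T \<and> set T \<subseteq> A \<longrightarrow> (\<Sum>ys\<in>permutations_of_set (A - set T). F (T@ys)) = 0"
    if "j \<le> l" for j
    using that
  proof (induction j)
    case 0 thus ?case using H by simp
  next
    case (Suc j)
    show ?case
    proof (intro allI impI)
      fix T assume T: "length T = l - Suc j \<and> distinct T \<and> set T \<subseteq> A"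
      have "card (set T) < card A" using T Suc.prems lA by (simp add: distinct_card)
      hence ne: "A - set T \<noteq> {}" using T by auto
      have "(\<Sum>ys\<in>permutations_of_set (A - set T). F (T@ys))
          = (\<Sum>a\<in>A - set T. \<Sum>ys\<in>permutations_of_set (A - set T - {a}). F (T@(a#ys)))"
        by (rule perms_sum) (use fin ne in auto)
      also have "\<dots> = (\<Sum>a\<in>A - set T. 0)"
      proof (rule sum.cong[OF refl])
        fix a assume a: "a \<in> A - set T"
        have "A - set T - {a} = A - set (T@[a])" by auto
        moreover have "length (T@[a]) = l - j \<and> distinct (T@[a]) \<and> set (T@[a]) \<subseteq> A"
          using T a Suc.prems by auto
        moreover have "j \<le> l" using Suc.prems by simp
        ultimately have "(\<Sum>ys\<in>permutations_of_set (A - set (T@[a])). F ((T@[a])@ys)) = 0"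
          using Suc.IH by blast
        thus "(\<Sum>ys\<in>permutations_of_set (A - set T - {a}). F (T@(a#ys))) = 0"
          using \<open>A - set T - {a} = A - set (T@[a])\<close> by simp
      qed
      finally show "(\<Sum>ys\<in>permutations_of_set (A - set T). F (T@ys)) = 0" by simp
    qed
  qed
  from this[of l] show ?thesis by simp
qed

lemma perm_list_sum:
  "(\<Sum>\<sigma> | \<sigma> permutes {1..d}. F (map \<sigma> [1..<d+1])) = (\<Sum>xs\<in>permutations_of_set {1..d}. F xs)"
proof -
  define h where "h \<sigma> = map \<sigma> [1..<d+1]" for \<sigma> :: "nat \<Rightarrow> nat"
  have inj: "inj_on h {\<sigma>. \<sigma> permutes {1..d}}"
  proof (rule inj_onI)
    fix \<sigma> \<tau> assume s: "\<sigma> \<in> {\<sigma>. \<sigma> permutes {1..d}}" "\<tau> \<in> {\<sigma>. \<sigma> permutes {1..d}}" and e: "h \<sigma> = h \<tau>"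
    show "\<sigma> = \<tau>"
    proof
      fix i show "\<sigma> i = \<tau> i"
      proof (cases "i \<in> {1..d}")
        case True
        have "\<forall>x\<in>set [1..<d+1]. \<sigma> x = \<tau> x" using e unfolding h_def map_eq_conv .
        thus ?thesis using True by (simp del: upt_Suc)
      next
        case False thus ?thesis using s permutes_not_in by (metis mem_Collect_eq)
      qed
    qed
  qed
  have img: "h ` {\<sigma>. \<sigma> permutes {1..d}} = permutations_of_set {1..d}"
  proof
    show "h ` {\<sigma>. \<sigma> permutes {1..d}} \<subseteq> permutations_of_set {1..d}"
    proof
      fix xs assume "xs \<in> h ` {\<sigma>. \<sigma> permutes {1..d}}"
      then obtain \<sigma> where s: "\<sigma> permutes {1..d}" and xs: "xs = h \<sigma>" by auto
      have "set xs = \<sigma> ` {1..d}" by (simp add: xs h_def atLeastLessThanSuc_atLeastAtMost del: upt_Suc)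
      also have "\<dots> = {1..d}" by (rule permutes_image[OF s])
      finally have "set xs = {1..d}" .
      moreover have "distinct xs" unfolding xs h_def
        using permutes_inj_on[OF s] by (simp add: distinct_map atLeastLessThanSuc_atLeastAtMost del: upt_Suc)
      ultimately show "xs \<in> permutations_of_set {1..d}" by (rule permutations_of_setI)
    qed
  next
    show "permutations_of_set {1..d} \<subseteq> h ` {\<sigma>. \<sigma> permutes {1..d}}"
    proof
      fix xs assume xs: "xs \<in> permutations_of_set {1..d}"
      have sx: "set xs = {1..d}" and dx: "distinct xs" using xs by (auto simp: permutations_of_set_def)
      have lx: "length xs = d" using length_finite_permutations_of_set[OF xs] by simp
      define \<sigma> where "\<sigma> i = (if i \<in> {1..d} then xs ! (i - 1) else i)" for i
      have b1: "bij_betw (\<lambda>i. i - 1) {1..d} {..<d}"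
        by (rule bij_betw_byWitness[where f'="\<lambda>i. i+1"]) auto
      have b2: "bij_betw ((!) xs) {..<d} {1..d}"
        using bij_betw_nth[OF dx] lx sx by auto
      have "bij_betw ((!) xs \<circ> (\<lambda>i. i - 1)) {1..d} {1..d}" by (rule bij_betw_trans[OF b1 b2])
      hence "bij_betw \<sigma> {1..d} {1..d}"
        by (rule bij_betw_cong[THEN iffD1, rotated]) (auto simp: \<sigma>_def)
      hence sp: "\<sigma> permutes {1..d}"
        by (rule bij_imp_permutes) (auto simp: \<sigma>_def)
      have "h \<sigma> = xs"
      proof (rule nth_equalityI)
        show "length (h \<sigma>) = length xs" by (simp add: h_def lx del: upt_Suc)
        fix i assume "i < length (h \<sigma>)"
        hence i: "i < d" by (simp add: h_def del: upt_Suc)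
        have "h \<sigma> ! i = \<sigma> (Suc i)" using i by (simp add: h_def del: upt_Suc)
        also have "\<dots> = xs ! i" using i by (simp add: \<sigma>_def)
        finally show "h \<sigma> ! i = xs ! i" .
      qed
      thus "xs \<in> h ` {\<sigma>. \<sigma> permutes {1..d}}" using sp by blast
    qed
  qed
  have "(\<Sum>xs\<in>permutations_of_set {1..d}. F xs) = (\<Sum>xs\<in>h ` {\<sigma>. \<sigma> permutes {1..d}}. F xs)"
    by (simp only: img)
  also have "\<dots> = (\<Sum>\<sigma> | \<sigma> permutes {1..d}. F (h \<sigma>))"
    by (subst sum.reindex[OF inj]) simp
  finally show ?thesis by (simp add: h_def)
qed

lemma aux4: "(x::real) / D * q * P / W = q / D * (x * P / W)"
  by (simp add: divide_inverse mult_ac)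

context gpv
begin

lemma zval_Z:
  assumes j: "j \<le> d"
  shows "zval d v \<sigma> j = Z (take j (map \<sigma> [1..<d+1]))"
proof -
  have tk: "take j (map \<sigma> [1..<d+1]) = map \<sigma> [1..<j+1]"
    using j by (simp add: take_map take_upt del: upt_Suc)
  have X: "Xmat d v \<sigma> j = Dm v (map \<sigma> [1..<j+1] @ [Suc d])"
  proof (rule eq_matI)
    fix r c assume "r < dim_row (Dm v (map \<sigma> [1..<j+1] @ [Suc d]))" "c < dim_col (Dm v (map \<sigma> [1..<j+1] @ [Suc d]))"
    hence rc: "r < j + 1" "c < j + 1" by (simp_all add: Dm_def del: upt_Suc)
    have "(map \<sigma> [1..<j+1] @ [Suc d]) ! r = (if r < j then \<sigma> (r+1) else Suc d)"
      using rc by (simp add: nth_append del: upt_Suc)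
    thus "Xmat d v \<sigma> j $$ (r, c) = Dm v (map \<sigma> [1..<j+1] @ [Suc d]) $$ (r, c)"
      using rc by (simp add: Xmat_def Dm_def del: upt_Suc)
  qed (simp_all add: Xmat_def Dm_def del: upt_Suc)
  have Y: "Ymat v \<sigma> j = Dm v (map \<sigma> [1..<j+1])"
  proof (rule eq_matI)
    fix r c assume "r < dim_row (Dm v (map \<sigma> [1..<j+1]))" "c < dim_col (Dm v (map \<sigma> [1..<j+1]))"
    hence rc: "r < j" "c < j" by (simp_all add: Dm_def del: upt_Suc)
    thus "Ymat v \<sigma> j $$ (r, c) = Dm v (map \<sigma> [1..<j+1]) $$ (r, c)"
      by (simp add: Ymat_def Dm_def del: upt_Suc)
  qed (simp_all add: Ymat_def Dm_def del: upt_Suc)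
  show ?thesis unfolding zval_def Z_def tk X Y DD_def by simp
qed

lemma final:
  assumes lkd: "l + k + 2 \<le> d"
  shows "(\<Sum>\<sigma> | \<sigma> permutes {1..d}.
           (sign \<sigma> :: real) * p (map (zval d v \<sigma>) [1..<l+1])
           * (\<Prod>j = l+1..d. zval d v \<sigma> j) / zval d v \<sigma> (l+1) ^ (k+1)) = 0"
proof -
  define D0 where "D0 = DD v [1..<d+1]"
  have D0: "D0 \<noteq> 0" unfolding D0_def by (rule DD_nz) (auto simp del: upt_Suc)
  define F where "F xs = DD v xs / D0 * p (map (\<lambda>j. Z (take j xs)) [1..<l+1])
       * (\<Prod>j = l+1..d. Z (take j xs)) / Z (take (l+1) xs) ^ (k+1)" for xs
  have "(\<Sum>\<sigma> | \<sigma> permutes {1..d}.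
           (sign \<sigma> :: real) * p (map (zval d v \<sigma>) [1..<l+1])
           * (\<Prod>j = l+1..d. zval d v \<sigma> j) / zval d v \<sigma> (l+1) ^ (k+1))
      = (\<Sum>\<sigma> | \<sigma> permutes {1..d}. F (map \<sigma> [1..<d+1]))"
  proof (rule sum.cong[OF refl])
    fix \<sigma> assume "\<sigma> \<in> {\<sigma>. \<sigma> permutes {1..d}}"
    hence s: "\<sigma> permutes {1..d}" by simp
    have sg: "(sign \<sigma> :: real) = DD v (map \<sigma> [1..<d+1]) / D0"
      using DD_sign[OF s, of v] D0 unfolding D0_def by simp
    have m: "map (zval d v \<sigma>) [1..<l+1] = map (\<lambda>j. Z (take j (map \<sigma> [1..<d+1]))) [1..<l+1]"
      by (rule map_cong[OF refl]) (use lkd in \<open>auto simp: zval_Z simp del: upt_Suc\<close>)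
    have pr: "(\<Prod>j = l+1..d. zval d v \<sigma> j) = (\<Prod>j = l+1..d. Z (take j (map \<sigma> [1..<d+1])))"
      by (rule prod.cong[OF refl]) (auto simp: zval_Z simp del: upt_Suc)
    have z1: "zval d v \<sigma> (l+1) = Z (take (l+1) (map \<sigma> [1..<d+1]))"
      using lkd by (simp add: zval_Z del: upt_Suc)
    show "(sign \<sigma> :: real) * p (map (zval d v \<sigma>) [1..<l+1])
           * (\<Prod>j = l+1..d. zval d v \<sigma> j) / zval d v \<sigma> (l+1) ^ (k+1) = F (map \<sigma> [1..<d+1])"
      unfolding F_def sg m pr z1 ..
  qed
  also have "\<dots> = (\<Sum>xs\<in>permutations_of_set {1..d}. F xs)"
    by (rule perm_list_sum)
  also have "\<dots> = 0"
  proof (rule prefix_zero)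
    show "finite {1..d}" by simp
    show "l \<le> card {1..d}" using lkd by simp
    fix T assume T: "length T = l" "distinct T" "set T \<subseteq> {1..d}"
    define B where "B = {1..d} - set T"
    have o: "ok T B" unfolding ok_def B_def using T by auto
    have cB: "card B = d - l" unfolding B_def using T by (simp add: card_Diff_subset distinct_card)
    define q where "q = p (map (\<lambda>j. Z (take j T)) [1..<l+1])"
    have Fe: "F (T@ys) = q / D0 * (DD v (T@ys) * (\<Prod>i<length ys. Z (T @ take (Suc i) ys)) / Z (T@[hd ys]) ^ Suc k)"
      if ys: "ys \<in> permutations_of_set B" for ys
    proof -
      have ly: "length ys = d - l" using length_finite_permutations_of_set[OF ys] cB by simp
      have a: "map (\<lambda>j. Z (take j (T@ys))) [1..<l+1] = map (\<lambda>j. Z (take j T)) [1..<l+1]"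
        by (rule map_cong[OF refl]) (use T in \<open>auto simp del: upt_Suc\<close>)
      have "(\<Prod>j = l+1..d. Z (take j (T@ys))) = (\<Prod>j\<in>{l+1..l+(d-l)}. Z (take j (T@ys)))"
        using lkd by simp
      also have "\<dots> = (\<Prod>i<d-l. Z (take (l+1+i) (T@ys)))" by (rule prod_shift_ivl)
      also have "\<dots> = (\<Prod>i<length ys. Z (T @ take (Suc i) ys))"
        using T ly by simp
      finally have b: "(\<Prod>j = l+1..d. Z (take j (T@ys))) = (\<Prod>i<length ys. Z (T @ take (Suc i) ys))" .
      have "ys \<noteq> []" using ly lkd by auto
      hence c: "take (l+1) (T@ys) = T@[hd ys]" using T by (cases ys) auto
      show ?thesis unfolding F_def a b c q_def[symmetric] Suc_eq_plus1 by (rule aux4)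
    qed
    have "(\<Sum>ys\<in>permutations_of_set B. F (T@ys))
        = (\<Sum>ys\<in>permutations_of_set B. q / D0 * (DD v (T@ys) * (\<Prod>i<length ys. Z (T @ take (Suc i) ys)) / Z (T@[hd ys]) ^ Suc k))"
      by (rule sum.cong[OF refl]) (rule Fe)
    also have "\<dots> = q / D0 * (\<Sum>ys\<in>permutations_of_set B. DD v (T@ys) * (\<Prod>i<length ys. Z (T @ take (Suc i) ys)) / Z (T@[hd ys]) ^ Suc k)"
      by (simp only: sum_distrib_left)
    also have "(\<Sum>ys\<in>permutations_of_set B. DD v (T@ys) * (\<Prod>i<length ys. Z (T @ take (Suc i) ys)) / Z (T@[hd ys]) ^ Suc k) = 0"
      by (rule main_inner[OF o cB]) (use lkd in simp)
    finally show "(\<Sum>ys\<in>permutations_of_set ({1..d} - set T). F (T@ys)) = 0" by (simp add: B_def)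
  qed
  finally show ?thesis .
qed

end

theorem mainTheorem16:
  fixes d l k :: nat and v :: "nat \<Rightarrow> nat \<Rightarrow> real" and p :: "real list \<Rightarrow> real"
  assumes "is_d_simplex d v"
    and "general_position d v"
    and "l + k + 2 \<le> d"
  shows "(\<Sum>\<sigma> | \<sigma> permutes {1..d}.
           (sign \<sigma> :: real) * p (map (zval d v \<sigma>) [1..<l+1])
           * (\<Prod>j = l+1..d. zval d v \<sigma> j) / zval d v \<sigma> (l+1) ^ (k+1)) = 0"
proof -
  interpret gpv d v by (unfold_locales) (rule assms(2))
  show ?thesis by (rule final[OF assms(3)])
qed

end
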